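(* Let $r\ge 1$ be an odd integer. For every nonnegative integer $n$, the number of overpartitions of $n$ in which every non-overlined part is even and greater than $r$ (overlined parts being unrestricted apart from being distinct) equals the number of partitions of $n$ in which no even integer less than $r$ appears as a part.
   Context: A partition of $n$ is a finite non-increasing sequence of positive integers (parts) summing to $n$ (the empty partition is the unique partition of $0$). An overpartition of $n$ is a partition of $n$ in which the first occurrence of each part size may be overlined; equivalently, a pair $(\lambda,\mu)$ with $\lambda$ a partition into distinct parts (the overlined parts), $\mu$ an arbitrary partition (the non-overlined parts), and $|\lambda|+|\mu|=n$. *)

theory Defs
  imports Main "HOL-Library.Multiset"
begin

definition partitions :: "nat \<Rightarrow> nat multiset set" where
  "partitions n = {M. (\<forall>p\<in>#M. 0 < p) \<and> sum_mset M = n}"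

text \<open>An overpartition of n: a pair (lambda, mu) with lambda a finite set of positive
  integers (the distinct overlined parts) and mu a partition (the non-overlined parts),
  with total sum n.\<close>
definition overpartitions :: "nat \<Rightarrow> (nat set \<times> nat multiset) set" where
  "overpartitions n = {(L, M). finite L \<and> (\<forall>p\<in>L. 0 < p) \<and> (\<forall>p\<in>#M. 0 < p)
                          \<and> \<Sum>L + sum_mset M = n}"

end

theory Submission imports Defs begin

definition sb :: "nat set \<Rightarrow> nat" where "sb A = (\<Sum>i\<in>A. 2^i)"

lemma sb_split:
  assumes "finite A"
  shows "sb A = (if 0 \<in> A then 1 else 0) + 2 * sb {i. Suc i \<in> A}"
proof -
  have fin: "finite {i. Suc i \<in> A}"
    using finite_vimageI[OF assms, of Suc] by (simp add: vimage_def)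
  have A: "A = (A \<inter> {0}) \<union> Suc ` {i. Suc i \<in> A}"
    by (auto simp: image_iff) (metis not0_implies_Suc)
  have "sb A = sb (A \<inter> {0}) + sb (Suc ` {i. Suc i \<in> A})"
    unfolding sb_def by (subst A, rule sum.union_disjoint) (use fin in auto)
  also have "sb (Suc ` {i. Suc i \<in> A}) = 2 * sb {i. Suc i \<in> A}"
    unfolding sb_def by (subst sum.reindex) (auto simp: sum_distrib_left)
  also have "sb (A \<inter> {0}) = (if 0 \<in> A then 1 else 0)"
    unfolding sb_def by auto
  finally show ?thesis .
qed

lemma bit_sb: "finite A \<Longrightarrow> bit (sb A) j \<longleftrightarrow> j \<in> A"
proof (induction j arbitrary: A)
  case 0
  then show ?case by (subst sb_split) (auto simp: bit_0)
next
  case (Suc j)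
  have fin: "finite {i. Suc i \<in> A}"
    using finite_vimageI[OF Suc.prems, of Suc] by (simp add: vimage_def)
  have "sb A div 2 = sb {i. Suc i \<in> A}"
    by (subst sb_split[OF Suc.prems]) auto
  then show ?case using Suc.IH[OF fin] by (simp add: bit_Suc)
qed

lemma bits_finite: "finite {i. bit (c::nat) i}"
proof (induction c rule: less_induct)
  case (less c)
  show ?case
  proof (cases "c = 0")
    case True then show ?thesis by simp
  next
    case False
    have "{i. bit c i} \<subseteq> {0} \<union> Suc ` {i. bit (c div 2) i}"
      by (auto simp: image_iff bit_Suc) (metis bit_Suc not0_implies_Suc)
    moreover have "finite {i. bit (c div 2) i}" using less False by simp
    ultimately show ?thesis using finite_subset by blast
  qed
qed

lemma sb_bits: "sb {i. bit (c::nat) i} = c"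
  by (rule bit_eq_iff[THEN iffD2]) (simp add: bit_sb[OF bits_finite])

fun v2 :: "nat \<Rightarrow> nat" where
  "v2 p = (if p = 0 \<or> odd p then 0 else Suc (v2 (p div 2)))"

declare v2.simps[simp del]

definition oddpart :: "nat \<Rightarrow> nat" where "oddpart p = p div 2 ^ v2 p"

lemma v2_decomp: "p > 0 \<Longrightarrow> 2 ^ v2 p * oddpart p = p \<and> odd (oddpart p)"
proof (induction p rule: v2.induct)
  case (1 p)
  show ?case
  proof (cases "odd p")
    case True then show ?thesis by (simp add: oddpart_def v2.simps)
  next
    case False
    then have "p div 2 > 0" using 1(2) by auto
    then have IH: "2 ^ v2 (p div 2) * oddpart (p div 2) = p div 2 \<and> odd (oddpart (p div 2))"
      using 1(1) 1(2) False by auto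
    have v: "v2 p = Suc (v2 (p div 2))" using False 1(2) by (simp add: v2.simps)
    have "oddpart p = oddpart (p div 2)"
      unfolding oddpart_def v by (simp add: div_mult2_eq)
    then show ?thesis using IH v False by auto
  qed
qed

lemma v2_mult: "odd q \<Longrightarrow> v2 (q * 2 ^ i) = i \<and> oddpart (q * 2 ^ i) = q"
proof (induction i)
  case 0 then show ?case by (simp add: v2.simps oddpart_def)
next
  case (Suc i)
  have "q > 0" using Suc.prems by (cases q) auto
  then have v: "v2 (q * 2 ^ Suc i) = Suc (v2 (q * 2 ^ i))"
    by (subst v2.simps) simp
  show ?case using Suc v by (simp add: oddpart_def)
qed

lemma decomp_iff:
  assumes "p > 0" "odd q"
  shows "p = q * 2 ^ i \<longleftrightarrow> q = oddpart p \<and> i = v2 p"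
  using v2_mult[OF assms(2), of i] v2_decomp[OF assms(1)] by (auto simp: mult.commute)


lemma mult_pow_inj:
  fixes q q' i j :: nat
  assumes "odd q" "odd q'" shows "q * 2 ^ i = q' * 2 ^ j \<longleftrightarrow> q = q' \<and> i = j"
proof
  assume h: "q * 2 ^ i = q' * 2 ^ j"
  have "v2 (q * 2 ^ i) = v2 (q' * 2 ^ j)" "oddpart (q * 2 ^ i) = oddpart (q' * 2 ^ j)"
    using h by simp_all
  then show "q = q' \<and> i = j" using v2_mult[of q i] v2_mult[of q' j] assms by simp
qed auto

definition glai :: "nat set \<Rightarrow> nat multiset" where
  "glai L = (\<Sum>p\<in>L. replicate_mset (2 ^ v2 p) (oddpart p))"

definition unglai :: "nat multiset \<Rightarrow> nat set" where
  "unglai N = (\<Union>q\<in>set_mset N. (\<lambda>i. q * 2 ^ i) ` {i. bit (count N q) i})"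

lemma count_glai:
  assumes fin: "finite L" and pos: "\<forall>p\<in>L. p > 0"
  shows "count (glai L) q = (if odd q then sb {i. q * 2 ^ i \<in> L} else 0)"
proof -
  have "count (glai L) q = (\<Sum>p\<in>L. if oddpart p = q then 2 ^ v2 p else 0)"
    unfolding glai_def count_sum by (intro sum.cong) auto
  also have "\<dots> = (\<Sum>p\<in>{p\<in>L. oddpart p = q}. 2 ^ v2 p)"
    using fin by (simp add: sum.inter_filter)
  finally have c: "count (glai L) q = (\<Sum>p\<in>{p\<in>L. oddpart p = q}. 2 ^ v2 p)" .
  show ?thesis
  proof (cases "odd q")
    case True
    have img: "{p\<in>L. oddpart p = q} = (\<lambda>i. q * 2 ^ i) ` {i. q * 2 ^ i \<in> L}"
    proof (rule set_eqI, rule iffI)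
      fix p assume "p \<in> {p\<in>L. oddpart p = q}"
      then have p: "p \<in> L" "q = oddpart p" by auto
      then have "p = q * 2 ^ v2 p" using v2_decomp[of p] pos by (auto simp: mult.commute)
      then show "p \<in> (\<lambda>i. q * 2 ^ i) ` {i. q * 2 ^ i \<in> L}" using p(1) by (metis (mono_tags, lifting) image_eqI mem_Collect_eq)
    next
      fix p assume "p \<in> (\<lambda>i. q * 2 ^ i) ` {i. q * 2 ^ i \<in> L}"
      then obtain i where "p = q * 2 ^ i" "q * 2 ^ i \<in> L" by auto
      then show "p \<in> {p\<in>L. oddpart p = q}" using v2_mult[OF True, of i] by auto
    qed
    have inj: "inj_on (\<lambda>i. q * 2 ^ i) {i. q * 2 ^ i \<in> L}"
      by (rule inj_onI) (use mult_pow_inj[OF True True] in auto)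
    show ?thesis using True unfolding c img sb_def
      by (subst sum.reindex[OF inj]) (auto simp: v2_mult)
  next
    case False
    have "{p\<in>L. oddpart p = q} = {}"
    proof -
      { fix p assume "p \<in> L" "oddpart p = q"
        then have False using v2_decomp[of p] pos False by auto }
      then show ?thesis by blast
    qed
    then show ?thesis unfolding c using False by (simp only:) simp
  qed
qed

lemma glai_odd:
  assumes "finite L" "\<forall>p\<in>L. p > 0" "q \<in># glai L" shows "odd q"
proof (rule ccontr)
  assume "\<not> odd q"
  then have "count (glai L) q = 0" using count_glai[OF assms(1,2), of q] by simp
  then show False using assms(3) by (simp add: count_eq_zero_iff)
qed

lemma sum_glai:
  assumes "finite L" "\<forall>p\<in>L. p > 0" shows "sum_mset (glai L) = \<Sum>L"
  using assms unfolding glai_def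
proof (induction L rule: finite_induct)
  case (insert x F)
  then show ?case using v2_decomp[of x] by simp
qed simp

lemma unglai_glai:
  assumes fin: "finite L" and pos: "\<forall>p\<in>L. p > 0"
  shows "unglai (glai L) = L"
proof -
  have finS: "finite {i. q * 2 ^ i \<in> L}" if "odd q" for q
  proof -
    have "inj (\<lambda>i. q * 2 ^ i)" by (rule injI) (use mult_pow_inj[OF that that] in auto)
    then show ?thesis using finite_vimageI[OF fin] by (simp add: vimage_def)
  qed
  show ?thesis
  proof (rule set_eqI, rule iffI)
    fix p assume "p \<in> unglai (glai L)"
    then obtain q i where q: "q \<in># glai L" "bit (count (glai L) q) i" "p = q * 2 ^ i"
      unfolding unglai_def by auto
    have oq: "odd q" using glai_odd[OF fin pos q(1)] .
    show "p \<in> L" using q(2,3) oq by (simp add: count_glai[OF fin pos] bit_sb[OF finS[OF oq]])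
  next
    fix p assume p: "p \<in> L"
    define q where "q = oddpart p"
    have oq: "odd q" and pe: "p = q * 2 ^ v2 p" using v2_decomp[of p] pos p
      by (auto simp: q_def mult.commute)
    have b: "bit (count (glai L) q) (v2 p)"
      using oq p pe by (simp add: count_glai[OF fin pos] bit_sb[OF finS[OF oq]])
    then have "count (glai L) q \<noteq> 0" by (cases "count (glai L) q = 0") simp_all
    then have "q \<in># glai L" by (simp add: count_eq_zero_iff)
    then show "p \<in> unglai (glai L)" unfolding unglai_def using b pe by auto
  qed
qed

lemma unglai_props:
  assumes odd: "\<forall>q\<in>#N. odd q"
  shows "finite (unglai N)" "\<forall>p\<in>unglai N. p > 0" "glai (unglai N) = N"
proof -
  show fin: "finite (unglai N)" unfolding unglai_def using bits_finite by auto
  show pos: "\<forall>p\<in>unglai N. p > 0" unfolding unglai_def using odd by (auto intro!: odd_pos)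
  show "glai (unglai N) = N"
  proof (rule multiset_eqI)
    fix q
    show "count (glai (unglai N)) q = count N q"
    proof (cases "odd q")
      case True
      have "{i. q * 2 ^ i \<in> unglai N} = {i. bit (count N q) i}"
      proof (rule set_eqI, rule iffI)
        fix i assume "i \<in> {i. q * 2 ^ i \<in> unglai N}"
        then obtain q' j where "q' \<in># N" "bit (count N q') j" "q * 2 ^ i = q' * 2 ^ j"
          unfolding unglai_def by auto
        then show "i \<in> {i. bit (count N q) i}" using mult_pow_inj[OF True, of q' i j] odd by auto
      next
        fix i assume "i \<in> {i. bit (count N q) i}"
        then have b: "bit (count N q) i" by simp
        then have "count N q \<noteq> 0" by (cases "count N q = 0") simp_all
        then have "q \<in># N" by (simp add: count_eq_zero_iff)
        then show "i \<in> {i. q * 2 ^ i \<in> unglai N}" using b unfolding unglai_def by blast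
      qed
      then show ?thesis using True by (simp add: count_glai[OF fin pos] sb_bits)
    next
      case False
      then have "q \<notin># N" using odd by auto
      then show ?thesis using False by (simp add: count_glai[OF fin pos] count_eq_zero_iff)
    qed
  qed
qed


lemma part_oe: "filter_mset odd N + filter_mset even N = (N :: nat multiset)"
  using multiset_partition[of N even] by (metis add.commute)

lemma fm_all: "\<forall>x\<in>#M. P x \<Longrightarrow> filter_mset P M = M"
  by (induction M) auto

lemma fm_none: "\<forall>x\<in>#M. \<not> P x \<Longrightarrow> filter_mset P M = {#}"
  by simp

theorem proposition2p4:
  fixes r n :: nat
  assumes "r \<ge> 1" and "odd r"
  shows "card {(L, M) \<in> overpartitions n. \<forall>p\<in>#M. even p \<and> r < p}
       = card {M \<in> partitions n. \<forall>p\<in>#M. \<not> (even p \<and> p < r)}"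
proof -
  define A where "A = {(L, M) \<in> overpartitions n. \<forall>p\<in>#M. even p \<and> r < p}"
  define B where "B = {M \<in> partitions n. \<forall>p\<in>#M. \<not> (even p \<and> p < r)}"
  define f where "f = (\<lambda>(L, M). glai L + M)"
  define g where "g = (\<lambda>N. (unglai (filter_mset odd N), filter_mset even (N :: nat multiset)))"
  have memA: "(L, M) \<in> A \<longleftrightarrow> finite L \<and> (\<forall>p\<in>L. 0 < p) \<and> (\<forall>p\<in>#M. 0 < p)
      \<and> \<Sum>L + sum_mset M = n \<and> (\<forall>p\<in>#M. even p \<and> r < p)" for L M
    unfolding A_def overpartitions_def by auto
  have memB: "N \<in> B \<longleftrightarrow> (\<forall>p\<in>#N. 0 < p) \<and> sum_mset N = n \<and> (\<forall>p\<in>#N. \<not> (even p \<and> p < r))" for N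
    unfolding B_def partitions_def by auto
  have "bij_betw f A B"
  proof (rule bij_betw_byWitness[where f' = g])
    show "\<forall>a\<in>A. g (f a) = a"
    proof
      fix a assume "a \<in> A"
      then obtain L M where a: "a = (L, M)" and h: "finite L" "\<forall>p\<in>L. 0 < p"
        "\<forall>p\<in>#M. even p \<and> r < p" using memA by (cases a) auto
      have o: "\<forall>q\<in>#glai L. odd q" using glai_odd[OF h(1,2)] by blast
      have "filter_mset odd (glai L + M) = glai L"
        using o h(3) fm_all[of "glai L" odd] fm_none[of M odd] by simp
      moreover have "filter_mset even (glai L + M) = M"
        using o h(3) fm_none[of "glai L" even] fm_all[of M even] by simp
      ultimately show "g (f a) = a" unfolding a f_def g_def using unglai_glai[OF h(1,2)] by simp
    qed
  next
    show "\<forall>b\<in>B. f (g b) = b"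
    proof
      fix N assume "N \<in> B"
      have "glai (unglai (filter_mset odd N)) = filter_mset odd N"
        by (rule unglai_props(3)) auto
      then show "f (g N) = N" unfolding f_def g_def using part_oe[of N] by simp
    qed
  next
    show "f ` A \<subseteq> B"
    proof
      fix b assume "b \<in> f ` A"
      then obtain L M where "(L, M) \<in> A" and b: "b = glai L + M" unfolding f_def by auto
      then have h: "finite L" "\<forall>p\<in>L. 0 < p" "\<forall>p\<in>#M. 0 < p" "\<Sum>L + sum_mset M = n"
        "\<forall>p\<in>#M. even p \<and> r < p" using memA by auto
      have o: "\<forall>q\<in>#glai L. odd q" using glai_odd[OF h(1,2)] by blast
      have p1: "\<forall>p\<in>#glai L + M. 0 < p"
      proof
        fix p assume "p \<in># glai L + M"
        then have "p \<in># glai L \<or> p \<in># M" by simp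
        then show "0 < p"
        proof
          assume "p \<in># glai L" then have "odd p" using o by blast
          then show "0 < p" by (rule odd_pos)
        qed (use h(3) in blast)
      qed
      have p2: "sum_mset (glai L + M) = n" using h(4) sum_glai[OF h(1,2)] by simp
      have p3: "\<forall>p\<in>#glai L + M. \<not> (even p \<and> p < r)"
      proof
        fix p assume "p \<in># glai L + M"
        then have "p \<in># glai L \<or> p \<in># M" by simp
        then show "\<not> (even p \<and> p < r)"
        proof
          assume "p \<in># glai L" then have "odd p" using o by blast
          then show ?thesis by blast
        next
          assume "p \<in># M" then have "r < p" using h(5) by blast
          then show ?thesis by simp
        qed
      qed
      show "b \<in> B" unfolding memB b using p1 p2 p3 by blast
    qed
  next
    show "g ` B \<subseteq> A"
    proof
      fix a assume "a \<in> g ` B"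
      then obtain N where "N \<in> B" and a: "a = g N" by auto
      then have h: "\<forall>p\<in>#N. 0 < p" "sum_mset N = n" "\<forall>p\<in>#N. \<not> (even p \<and> p < r)"
        using memB by auto
      have oN: "\<forall>q\<in>#filter_mset odd N. odd q" by auto
      note U = unglai_props[OF oN]
      have s: "\<Sum>(unglai (filter_mset odd N)) = sum_mset (filter_mset odd N)"
        using sum_glai[OF U(1,2)] U(3) by simp
      have sN: "sum_mset (filter_mset odd N) + sum_mset (filter_mset even N) = n"
        using h(2) part_oe[of N] by (metis sum_mset.union)
      have ev: "\<forall>p\<in>#filter_mset even N. even p \<and> r < p"
      proof
        fix p assume "p \<in># filter_mset even N"
        then have "p \<in># N" "even p" by auto
        then have "\<not> p < r" "p \<noteq> r" using h(3) assms(2) by auto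
        then show "even p \<and> r < p" using \<open>even p\<close> by simp
      qed
      have p4: "\<forall>p\<in>#filter_mset even N. 0 < p" using h(1) by simp
      have p5: "\<Sum>(unglai (filter_mset odd N)) + sum_mset (filter_mset even N) = n"
        using s sN by simp
      show "a \<in> A" unfolding a g_def prod.case memA using U(1,2) p4 p5 ev by blast
    qed
  qed
  then show ?thesis unfolding A_def B_def by (rule bij_betw_same_card)
qed

end
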